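(* Let $\mathfrak{sl}_2[x,y] := \mathfrak{sl}_2 \otimes_{\mathbb{C}} \mathbb{C}[x,y]$ be the complex Lie algebra of $\mathfrak{sl}_2$-valued polynomials in two commuting variables $x,y$, with bracket $[\xi,\eta](x,y)=[\xi(x,y),\eta(x,y)]$. Consider the Lie algebra $2$-cochain $$c(\xi,\eta) := \operatorname{Tr}\big(\partial_x\xi\,\partial_y\eta - \partial_y\xi\,\partial_x\eta\big)\big|_{x=y=0}, \qquad \xi,\eta\in\mathfrak{sl}_2[x,y].$$ Then $c$ is a $2$-cocycle, and the cup-square of its class in $H^2(\mathfrak{sl}_2[x,y];\mathbb{C})$ is zero in $H^4(\mathfrak{sl}_2[x,y];\mathbb{C})$.
   Context: Lie algebra cohomology is taken with trivial coefficients $\mathbb{C}$ (Chevalley–Eilenberg cohomology), with its cup product. $\partial_x,\partial_y$ denote partial derivatives applied entrywise, $\operatorname{Tr}$ is the trace of $2\times 2$ matrices. *)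

theory Defs
  imports "HOL-Analysis.Analysis"
begin

text \<open>Elements of sl2[x,y] are represented by their coefficient functions:
  a polynomial is a map from exponent pairs (i,j) (monomial x^i y^j) to 2x2 complex
  matrices, with finite support and every coefficient traceless.\<close>

type_synonym mat2 = "complex^2^2"
type_synonym slpoly = "nat \<times> nat \<Rightarrow> mat2"

definition sl2xy :: "slpoly set" where
  "sl2xy = {\<xi>. finite {m. \<xi> m \<noteq> 0} \<and> (\<forall>m. trace (\<xi> m) = 0)}"

definition padd :: "slpoly \<Rightarrow> slpoly \<Rightarrow> slpoly" where
  "padd \<xi> \<eta> = (\<lambda>m. \<xi> m + \<eta> m)"

definition psmul :: "complex \<Rightarrow> slpoly \<Rightarrow> slpoly" where
  "psmul a \<xi> = (\<lambda>m. \<chi> i j. a * (\<xi> m $ i $ j))"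

text \<open>Pointwise commutator of polynomial matrices, computed on coefficients
  (Cauchy product in two variables).\<close>
definition pbracket :: "slpoly \<Rightarrow> slpoly \<Rightarrow> slpoly" where
  "pbracket \<xi> \<eta> = (\<lambda>(k1, k2).
     \<Sum>(a1, a2) \<in> {..k1} \<times> {..k2}.
        \<xi> (a1, a2) ** \<eta> (k1 - a1, k2 - a2) - \<eta> (k1 - a1, k2 - a2) ** \<xi> (a1, a2))"

text \<open>Chevalley--Eilenberg n-cochains with trivial coefficients: functions on
  lists of length n of elements of sl2[x,y], multilinear and alternating.\<close>
definition is_cochain :: "nat \<Rightarrow> (slpoly list \<Rightarrow> complex) \<Rightarrow> bool" where
  "is_cochain n f \<longleftrightarrow>
     (\<forall>xs i u v a b. length xs = n \<and> set xs \<subseteq> sl2xy \<and> i < n \<and> u \<in> sl2xy \<and> v \<in> sl2xy \<longrightarrow>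
        f (xs[i := padd (psmul a u) (psmul b v)]) = a * f (xs[i := u]) + b * f (xs[i := v])) \<and>
     (\<forall>xs i j. length xs = n \<and> set xs \<subseteq> sl2xy \<and> i < j \<and> j < n \<and> xs ! i = xs ! j \<longrightarrow> f xs = 0)"

definition coboundary :: "nat \<Rightarrow> (slpoly list \<Rightarrow> complex) \<Rightarrow> slpoly list \<Rightarrow> complex" where
  "coboundary n f xs =
     (\<Sum>i<n+1. \<Sum>j\<in>{i<..<n+1}.
        (-1) ^ (i + j) * f (pbracket (xs ! i) (xs ! j) # nths xs (- {i, j})))"

text \<open>Cup product of a p-cochain and a q-cochain (shuffle formula).  The sign of the
  (p,q)-shuffle with first block S is (-1)^(sum S - p(p-1)/2).\<close>
definition cup :: "nat \<Rightarrow> nat \<Rightarrow> (slpoly list \<Rightarrow> complex) \<Rightarrow> (slpoly list \<Rightarrow> complex)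
                    \<Rightarrow> slpoly list \<Rightarrow> complex" where
  "cup p q \<alpha> \<beta> xs =
     (\<Sum>S \<in> {S. S \<subseteq> {..<p+q} \<and> card S = p}.
        (-1) ^ (\<Sum>S) * (-1) ^ (p * (p - 1) div 2) * \<alpha> (nths xs S) * \<beta> (nths xs (- S)))"

text \<open>The cochain c(xi,eta) = Tr(d_x xi d_y eta - d_y xi d_x eta) at x=y=0:
  d_x xi at 0 is the coefficient of x (exponent (1,0)), d_y xi at 0 that of y.\<close>
definition c_cochain :: "slpoly list \<Rightarrow> complex" where
  "c_cochain xs = trace ((xs ! 0) (1, 0) ** (xs ! 1) (0, 1) - (xs ! 0) (0, 1) ** (xs ! 1) (1, 0))"

end

theory Submission
  imports Defs
begin


definition br :: "mat2 \<Rightarrow> mat2 \<Rightarrow> mat2" where "br U V = U ** V - V ** U"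
definition K :: "mat2 \<Rightarrow> mat2 \<Rightarrow> complex" where "K U V = trace (U ** V)"
definition Phi :: "mat2 \<Rightarrow> mat2 \<Rightarrow> mat2 \<Rightarrow> complex" where "Phi U V W = K (br U V) W"

lemma K_sym: "K U V = K V U" unfolding K_def by (rule trace_mul_sym)

lemma ent: "trace (M::mat2) = M$1$1 + M$2$2" by (simp add: trace_def sum_2)
lemma mult_ent: "((A::mat2) ** B) $ i $ j = A$i$1 * B$1$j + A$i$2 * B$2$j"
  by (simp add: matrix_matrix_mult_def sum_2)

lemma T_lemma:
  assumes "trace u = 0" "trace v = 0" "trace w = 0" "trace z = 0"
  shows "K (br u v) (br w z) = 2 * (K u z * K v w - K u w * K v z)"
proof -
  have a: "u$2$2 = - u$1$1" "v$2$2 = - v$1$1" "w$2$2 = - w$1$1" "z$2$2 = - z$1$1"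
    using assms by (auto simp: ent add_eq_0_iff)
  show ?thesis unfolding K_def br_def ent
    by (simp add: mult_ent a) algebra
qed



lemma atMost_Suc0_eq: "{..Suc 0} = {0, Suc 0}" by auto

lemma pb01: "pbracket \<xi> \<eta> (0,1) = br (\<xi> (0,0)) (\<eta> (0,1)) + br (\<xi> (0,1)) (\<eta> (0,0))"
  by (simp add: pbracket_def br_def atMost_Suc0_eq)
lemma pb10: "pbracket \<xi> \<eta> (1,0) = br (\<xi> (0,0)) (\<eta> (1,0)) + br (\<xi> (1,0)) (\<eta> (0,0))"
  by (simp add: pbracket_def br_def atMost_Suc0_eq)
lemma pb20: "pbracket \<xi> \<eta> (2,0) = br (\<xi> (0,0)) (\<eta> (2,0)) + br (\<xi> (1,0)) (\<eta> (1,0)) + br (\<xi> (2,0)) (\<eta> (0,0))"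
  by (simp add: pbracket_def br_def atMost_Suc0_eq numeral_2_eq_2 atMost_Suc insert_commute)

lemma gtlt_Suc: "{a<..<Suc b} = (if a < b then insert b {a<..<b} else {})" by auto

lemma cob2: "coboundary 2 f [p,q,r] = - f [pbracket p q, r] + f [pbracket p r, q] - f [pbracket q r, p]"
  by (simp add: coboundary_def numeral_3_eq_3 lessThan_Suc nths_Cons gtlt_Suc)


lemma cob3: "coboundary 3 f [p,q,r,s] = - f [pbracket p q, r, s] + f [pbracket p r, q, s] - f [pbracket p s, q, r]
   - f [pbracket q r, p, s] + f [pbracket q s, p, r] - f [pbracket r s, p, q]"
  by (simp add: coboundary_def numeral_3_eq_3 lessThan_Suc nths_Cons gtlt_Suc)

lemma subsets4: "{S. S \<subseteq> {..<2+2::nat} \<and> card S = 2} = {{0,1},{0,2},{0,3},{1,2},{1,3},{2,3}}"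
proof (rule set_eqI, rule iffI)
  fix S assume "S \<in> {S. S \<subseteq> {..<2+2::nat} \<and> card S = 2}"
  then obtain x y where "S = {x,y}" "x \<noteq> y" "x < 4" "y < 4" by (auto simp: card_2_iff)
  then show "S \<in> {{0,1},{0,2},{0,3},{1,2},{1,3},{2,3}}"
    by (auto simp: insert_commute less_Suc_eq numeral_eq_Suc)
qed auto

lemma cup22: "cup 2 2 f g [p,q,r,s] = f [p,q] * g [r,s] - f [p,r] * g [q,s] + f [p,s] * g [q,r]
   + f [q,r] * g [p,s] - f [q,s] * g [p,r] + f [r,s] * g [p,q]"
  unfolding cup_def subsets4
  by (simp add: nths_Cons numeral_eq_Suc doubleton_eq_iff)



lemma br_add1: "br (U + V) W = br U W + br V W"
  by (simp add: br_def vec_eq_iff mult_ent algebra_simps)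
lemma br_add2: "br W (U + V) = br W U + br W V"
  by (simp add: br_def vec_eq_iff mult_ent algebra_simps)
lemma K_add1: "K (U + V) W = K U W + K V W"
  by (simp add: K_def ent mult_ent algebra_simps)
lemma K_add2: "K W (U + V) = K W U + K W V"
  by (simp add: K_def ent mult_ent algebra_simps)
lemma R1: "K (br (br a b) w) z = K (br a b) (br w z)"
  by (simp add: K_def br_def ent mult_ent algebra_simps)
lemma R2: "K (br w (br a b)) z = K (br a b) (br z w)"
  by (simp add: K_def br_def ent mult_ent algebra_simps)
lemma trK: "trace (U ** V) = K U V" by (simp add: K_def)

lemma pb01': "pbracket \<xi> \<eta> (0,Suc 0) = br (\<xi> (0,0)) (\<eta> (0,1)) + br (\<xi> (0,1)) (\<eta> (0,0))"
  using pb01 by simp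
lemma pb10': "pbracket \<xi> \<eta> (Suc 0,0) = br (\<xi> (0,0)) (\<eta> (1,0)) + br (\<xi> (1,0)) (\<eta> (0,0))"
  using pb10 by simp
lemma R3: "K z (br (br a b) w) = K (br a b) (br w z)"
  using R1 K_sym by metis
lemma R4: "K z (br w (br a b)) = K (br a b) (br z w)"
  using R2 K_sym by metis

definition bco :: "slpoly list \<Rightarrow> complex" where
  "bco xs = - (Phi ((xs!0) (0,1)) ((xs!1) (0,1)) ((xs!2) (2,0)) + Phi ((xs!2) (0,1)) ((xs!0) (0,1)) ((xs!1) (2,0))
     + Phi ((xs!1) (0,1)) ((xs!2) (0,1)) ((xs!0) (2,0)))"

lemma main4:
  assumes "\<forall>m. trace (p m) = 0" "\<forall>m. trace (q m) = 0" "\<forall>m. trace (r m) = 0" "\<forall>m. trace (s m) = 0"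
  shows "cup 2 2 c_cochain c_cochain [p,q,r,s] = coboundary 3 bco [p,q,r,s]"
  unfolding cup22 cob3
  apply (simp add: bco_def c_cochain_def pb01 pb10 pb20 pb01' pb10' R3 R4 Phi_def br_add1 br_add2 K_add1 K_add2 R1 R2 trace_sub trK)
  apply (simp add: T_lemma assms)
  apply (simp add: K_sym algebra_simps)
  done



definition L :: "complex \<Rightarrow> mat2 \<Rightarrow> complex \<Rightarrow> mat2 \<Rightarrow> mat2" where
  "L a U b V = (\<chi> i j. a * U$i$j + b * V$i$j)"

lemma padd_L: "padd (psmul a u) (psmul b v) m = L a (u m) b (v m)"
  by (simp add: padd_def psmul_def L_def vec_eq_iff)

lemma K_L1: "K (L a U b V) W = a * K U W + b * K V W"
  by (simp add: K_def L_def ent mult_ent algebra_simps)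
lemma K_L2: "K W (L a U b V) = a * K W U + b * K W V"
  by (simp add: K_def L_def ent mult_ent algebra_simps)
lemma Phi_L1: "Phi (L a U b V) W Z = a * Phi U W Z + b * Phi V W Z"
  by (simp add: Phi_def K_def br_def L_def ent mult_ent algebra_simps)
lemma Phi_L2: "Phi W (L a U b V) Z = a * Phi W U Z + b * Phi W V Z"
  by (simp add: Phi_def K_def br_def L_def ent mult_ent algebra_simps)
lemma Phi_L3: "Phi W Z (L a U b V) = a * Phi W Z U + b * Phi W Z V"
  by (simp add: Phi_def K_def br_def L_def ent mult_ent algebra_simps)
lemma Phi_uu: "Phi U U W = 0"
  by (simp add: Phi_def br_def K_def ent)
lemma Phi_swap: "Phi U V W = - Phi V U W"
  by (simp add: Phi_def K_def br_def ent mult_ent algebra_simps)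

lemma len2: "length xs = 2 \<Longrightarrow> \<exists>p q. xs = [p,q]"
  by (clarsimp simp: eval_nat_numeral length_Suc_conv)
lemma len3: "length xs = 3 \<Longrightarrow> \<exists>p q r. xs = [p,q,r]"
  by (clarsimp simp: eval_nat_numeral length_Suc_conv)


lemma len4: "length xs = 4 \<Longrightarrow> \<exists>p q r s. xs = [p,q,r,s]"
  by (clarsimp simp: eval_nat_numeral length_Suc_conv)

lemma c_cochain_ok: "is_cochain 2 c_cochain"
  unfolding is_cochain_def
proof (intro conjI allI impI)
  fix xs :: "slpoly list" and i :: nat and u v a b
  assume h: "length xs = 2 \<and> set xs \<subseteq> sl2xy \<and> i < 2 \<and> u \<in> sl2xy \<and> v \<in> sl2xy"
  then obtain p q where xs: "xs = [p,q]" using len2 by blast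
  have "i = 0 \<or> i = 1" using h by auto
  then show "c_cochain (xs[i := padd (psmul a u) (psmul b v)]) =
         a * c_cochain (xs[i := u]) + b * c_cochain (xs[i := v])"
  proof
    assume "i = 0" then show ?thesis
      by (simp add: xs c_cochain_def padd_L trace_sub trK K_L1 right_diff_distrib)
  next
    assume "i = 1" then show ?thesis
      by (simp add: xs c_cochain_def padd_L trace_sub trK K_L2 right_diff_distrib)
  qed
next
  fix xs :: "slpoly list" and i j :: nat
  assume h: "length xs = 2 \<and> set xs \<subseteq> sl2xy \<and> i < j \<and> j < 2 \<and> xs ! i = xs ! j"
  then obtain p q where xs: "xs = [p,q]" using len2 by blast
  have ij: "i = 0" "j = 1" using h by auto
  have "q = p" using h unfolding xs ij by simp
  then show "c_cochain xs = 0"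
    by (simp add: xs c_cochain_def trace_sub trK K_sym)
qed

lemma bco_ok: "is_cochain 3 bco"
  unfolding is_cochain_def
proof (intro conjI allI impI)
  fix xs :: "slpoly list" and i :: nat and u v a b
  assume h: "length xs = 3 \<and> set xs \<subseteq> sl2xy \<and> i < 3 \<and> u \<in> sl2xy \<and> v \<in> sl2xy"
  then obtain p q r where xs: "xs = [p,q,r]" using len3 by blast
  have "i = 0 \<or> i = 1 \<or> i = 2" using h by auto
  then show "bco (xs[i := padd (psmul a u) (psmul b v)]) =
         a * bco (xs[i := u]) + b * bco (xs[i := v])"
    by (auto simp: xs bco_def padd_L Phi_L1 Phi_L2 Phi_L3 algebra_simps)
next
  fix xs :: "slpoly list" and i j :: nat
  assume h: "length xs = 3 \<and> set xs \<subseteq> sl2xy \<and> i < j \<and> j < 3 \<and> xs ! i = xs ! j"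
  then obtain p q r where xs: "xs = [p,q,r]" using len3 by blast
  have "(i = 0 \<and> j = 1) \<or> (i = 0 \<and> j = 2) \<or> (i = 1 \<and> j = 2)" using h by auto
  then show "bco xs = 0" using h
    by (auto simp: xs bco_def Phi_uu) (metis Phi_swap add.commute add_uminus_conv_diff diff_self)+
qed


lemma P1: "Phi a b c = - Phi b a c"
  by (simp add: Phi_def K_def br_def ent mult_ent algebra_simps)
lemma P2: "Phi a b c = - Phi a c b"
  by (simp add: Phi_def K_def br_def ent mult_ent algebra_simps)
lemma P3: "Phi a b c = Phi c a b"
  by (simp add: Phi_def K_def br_def ent mult_ent algebra_simps)

lemma cocyc_abs: "-(Phi ap xq yr + Phi xp aq yr - Phi ap yq xr - Phi yp aq xr)
  + (Phi ap xr yq + Phi xp ar yq - Phi ap yr xq - Phi yp ar xq)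
  - (Phi aq xr yp + Phi xq ar yp - Phi aq yr xp - Phi yq ar xp) = 0"
  using P1[of xp aq yr] P2[of ap yq xr] P3[of aq xr yp, symmetric]
    P1[of xp ar yq] P2[of ap yr xq] P3[of ar xq yp, symmetric]
    P1[of xq ar yp] P2[of aq yr xp] P3[of ar xp yq, symmetric]
  by simp

lemma cocycle: "coboundary 2 c_cochain [p,q,r] = 0"
  using cocyc_abs[where ap="p (0,0)" and xp="p (1,0)" and yp="p (0,1)" and aq="q (0,0)" and xq="q (1,0)" and yq="q (0,1)" and ar="r (0,0)" and xr="r (1,0)" and yr="r (0,1)"]
  unfolding cob2 c_cochain_def
  by (simp add: pb01 pb10 pb01' pb10' trace_sub trK K_add1 K_add2 Phi_def[symmetric] algebra_simps)


theorem proposition3p6: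
  shows "is_cochain 2 c_cochain
    \<and> (\<forall>xs. length xs = 3 \<and> set xs \<subseteq> sl2xy \<longrightarrow> coboundary 2 c_cochain xs = 0)
    \<and> (\<exists>b. is_cochain 3 b \<and>
         (\<forall>xs. length xs = 4 \<and> set xs \<subseteq> sl2xy \<longrightarrow>
              cup 2 2 c_cochain c_cochain xs = coboundary 3 b xs))"
proof (intro conjI allI impI exI[of _ bco])
  show "is_cochain 2 c_cochain" by (rule c_cochain_ok)
  show "is_cochain 3 bco" by (rule bco_ok)
next
  fix xs :: "slpoly list" assume "length xs = 3 \<and> set xs \<subseteq> sl2xy"
  then obtain p q r where "xs = [p,q,r]" using len3 by blast
  then show "coboundary 2 c_cochain xs = 0" using cocycle by simp
next
  fix xs :: "slpoly list" assume h: "length xs = 4 \<and> set xs \<subseteq> sl2xy"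
  then obtain p q r s where xs: "xs = [p,q,r,s]" using len4 by blast
  have "p \<in> sl2xy" "q \<in> sl2xy" "r \<in> sl2xy" "s \<in> sl2xy" using h xs by auto
  then show "cup 2 2 c_cochain c_cochain xs = coboundary 3 bco xs"
    unfolding xs by (intro main4) (auto simp: sl2xy_def)
qed

end
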